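(* Let $f:[0,1]\to[0,1]$, $f(x)=\frac{1-x}{1+x}$. Then $f$ is a bijection and $f\circ T\circ f^{-1}=T_E$ on $[0,1]$, where $T$ is the OOCF map and $T_E$ is the even integer continued fraction map.
   Context: For integers $k\ge1$ put $B(k+1,-1)=\left[\frac{k-1}{k},\frac{2k-1}{2k+1}\right]$ and $B(k,1)=\left[\frac{2k-1}{2k+1},\frac{k}{k+1}\right]$. The OOCF map $T:[0,1]\to[0,1]$ is $T(x)=\frac{kx-(k-1)}{k-(k+1)x}$ for $x\in B(k+1,-1)$, $T(x)=\frac{k-(k+1)x}{kx-(k-1)}$ for $x\in B(k,1)$ ($k\ge1$), and $T(1)=1$. The EICF map $T_E:[0,1]\to[0,1]$ is $T_E(y)=\frac1y-2k$ for $y\in\left[\frac1{2k+1},\frac1{2k}\right]$, $T_E(y)=2k-\frac1y$ for $y\in\left[\frac1{2k},\frac1{2k-1}\right]$ ($k\ge1$), and $T_E(0)=0$. *)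

theory Defs
  imports Complex_Main
begin

text \<open>Intervals B(k+1,-1) and B(k,1), for integers k \<ge> 1 (closed intervals, as in the paper).\<close>
definition B_minus :: "nat \<Rightarrow> real set" where
  "B_minus k = {(real k - 1) / real k .. (2 * real k - 1) / (2 * real k + 1)}"

definition B_plus :: "nat \<Rightarrow> real set" where
  "B_plus k = {(2 * real k - 1) / (2 * real k + 1) .. real k / (real k + 1)}"

text \<open>The OOCF map. On overlapping endpoints the defining formulas agree,
  so choosing any admissible k is harmless.\<close>
definition oocf_T :: "real \<Rightarrow> real" where
  "oocf_T x =
     (if x = 1 then 1
      else if (\<exists>k::nat. k \<ge> 1 \<and> x \<in> B_minus k) then
        (let k = real (SOME k::nat. k \<ge> 1 \<and> x \<in> B_minus k)
         in (k * x - (k - 1)) / (k - (k + 1) * x))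
      else
        (let k = real (SOME k::nat. k \<ge> 1 \<and> x \<in> B_plus k)
         in (k - (k + 1) * x) / (k * x - (k - 1))))"

definition eicf_T :: "real \<Rightarrow> real" where
  "eicf_T y =
     (if y = 0 then 0
      else if (\<exists>k::nat. k \<ge> 1 \<and> y \<in> {1 / (2 * real k + 1) .. 1 / (2 * real k)}) then
        (let k = real (SOME k::nat. k \<ge> 1 \<and> y \<in> {1 / (2 * real k + 1) .. 1 / (2 * real k)})
         in 1 / y - 2 * k)
      else
        (let k = real (SOME k::nat. k \<ge> 1 \<and> y \<in> {1 / (2 * real k) .. 1 / (2 * real k - 1)})
         in 2 * k - 1 / y))"

definition conj_f :: "real \<Rightarrow> real" where
  "conj_f x = (1 - x) / (1 + x)"

end

theory Submission
  imports Defs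
begin

lemma cf_range: "x \<in> {0..1::real} \<Longrightarrow> conj_f x \<in> {0..1}"
  by (auto simp: conj_f_def divide_simps)
lemma cf_ge0: "0 \<le> x \<Longrightarrow> x \<le> (1::real) \<Longrightarrow> 0 \<le> conj_f x"
  by (auto simp: conj_f_def divide_simps)
lemma cf_le1: "0 \<le> x \<Longrightarrow> x \<le> (1::real) \<Longrightarrow> conj_f x \<le> 1"
  by (auto simp: conj_f_def divide_simps)

lemma cf_invol: "x \<in> {0..1::real} \<Longrightarrow> conj_f (conj_f x) = x"
  by (auto simp: conj_f_def divide_simps)

lemma cf_bij: "bij_betw conj_f {0..1} {0..1::real}"
  by (rule bij_betw_byWitness[where f'=conj_f]) (auto simp: cf_invol cf_ge0 cf_le1)

lemma cf_t: "t \<ge> 1 \<Longrightarrow> conj_f (1/t) = (t-1)/(t+1)"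
  by (simp add: conj_f_def divide_simps)

lemma bm_iff: assumes "t \<ge> 1" "k \<ge> 1"
  shows "(t-1)/(t+1) \<in> B_minus k \<longleftrightarrow> 2*real k - 1 \<le> t \<and> t \<le> 2*real k"
proof -
  have k: "real k \<ge> 1" using assms by simp
  have "(real k - 1)/real k \<le> (t-1)/(t+1) \<longleftrightarrow> 2*real k - 1 \<le> t"
    using k assms(1) by (simp add: divide_simps) (auto simp: algebra_simps)
  moreover have "(t-1)/(t+1) \<le> (2*real k - 1)/(2*real k + 1) \<longleftrightarrow> t \<le> 2*real k"
    using k assms(1) by (simp add: divide_simps) (auto simp: algebra_simps)
  ultimately show ?thesis by (simp add: B_minus_def)
qed

lemma bp_iff: assumes "t \<ge> 1" "k \<ge> 1"
  shows "(t-1)/(t+1) \<in> B_plus k \<longleftrightarrow> 2*real k \<le> t \<and> t \<le> 2*real k + 1"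
proof -
  have k: "real k \<ge> 1" using assms by simp
  have "(2*real k - 1)/(2*real k + 1) \<le> (t-1)/(t+1) \<longleftrightarrow> 2*real k \<le> t"
    using k assms(1) by (simp add: divide_simps) (auto simp: algebra_simps)
  moreover have "(t-1)/(t+1) \<le> real k/(real k + 1) \<longleftrightarrow> t \<le> 2*real k + 1"
    using k assms(1) by (simp add: divide_simps) (auto simp: algebra_simps)
  ultimately show ?thesis by (simp add: B_plus_def)
qed

lemma e1_iff: assumes "t \<ge> 1" "k \<ge> 1"
  shows "1/t \<in> {1 / (2 * real k + 1) .. 1 / (2 * real k)} \<longleftrightarrow> 2*real k \<le> t \<and> t \<le> 2*real k + 1"
  using assms by (auto simp: divide_simps)

lemma e2_iff: assumes "t \<ge> 1" "k \<ge> 1"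
  shows "1/t \<in> {1 / (2 * real k) .. 1 / (2 * real k - 1)} \<longleftrightarrow> 2*real k - 1 \<le> t \<and> t \<le> 2*real k"
proof -
  have k: "2*real k - 1 \<ge> 1" using assms by simp
  show ?thesis using assms k by (auto simp: divide_simps)
qed

lemma fm: assumes "2*K - 1 \<le> t" "t \<le> 2*K" "t \<ge> 1"
  shows "conj_f ((K * ((t-1)/(t+1)) - (K - 1)) / (K - (K + 1) * ((t-1)/(t+1)))) = 2*K - t"
proof -
  have a: "(K * ((t-1)/(t+1)) - (K - 1)) / (K - (K + 1) * ((t-1)/(t+1))) = (t-2*K+1)/(2*K+1-t)"
    using assms by (simp add: divide_simps) (auto simp: algebra_simps)
  show ?thesis unfolding a conj_f_def using assms by (simp add: divide_simps)
qed

lemma fp: assumes "2*K \<le> t" "t \<le> 2*K+1" "t \<ge> 1"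
  shows "conj_f ((K - (K + 1) * ((t-1)/(t+1))) / (K * ((t-1)/(t+1)) - (K - 1))) = t - 2*K"
proof -
  have a: "(K - (K + 1) * ((t-1)/(t+1))) / (K * ((t-1)/(t+1)) - (K - 1)) = (2*K+1-t)/(t-2*K+1)"
    using assms by (simp add: divide_simps) (auto simp: algebra_simps)
  show ?thesis unfolding a conj_f_def using assms by (simp add: divide_simps)
qed

lemma exist_k: assumes "t \<ge> (1::real)"
  shows "\<exists>k::nat. k \<ge> 1 \<and> ((2*real k - 1 \<le> t \<and> t \<le> 2*real k) \<or> (2*real k \<le> t \<and> t \<le> 2*real k + 1))"
proof -
  define n where "n = nat \<lfloor>t\<rfloor>"
  have "\<lfloor>t\<rfloor> \<ge> 1" using assms by simp
  hence n1: "n \<ge> 1" by (simp add: n_def le_nat_iff)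
  have nt: "real n \<le> t" "t < real n + 1" using assms by (auto simp: n_def)
  show ?thesis
  proof (cases "even n")
    case True
    then obtain k where "n = 2*k" by auto
    thus ?thesis using n1 nt by (intro exI[of _ k]) auto
  next
    case False
    then obtain k where "n = 2*k+1" using oddE by blast
    thus ?thesis using n1 nt by (intro exI[of _ "k+1"]) auto
  qed
qed

lemma main_t: assumes t: "t \<ge> (1::real)"
  shows "conj_f (oocf_T ((t-1)/(t+1))) = eicf_T (1/t)"
proof -
  let ?x = "(t-1)/(t+1)"
  have x1: "?x \<noteq> 1" using t by (simp add: divide_simps)
  have y0: "1/t \<noteq> 0" using t by simp
  let ?PM = "\<lambda>k::nat. k \<ge> 1 \<and> ?x \<in> B_minus k"
  let ?PP = "\<lambda>k::nat. k \<ge> 1 \<and> ?x \<in> B_plus k"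
  let ?E1 = "\<lambda>k::nat. k \<ge> 1 \<and> 1/t \<in> {1 / (2 * real k + 1) .. 1 / (2 * real k)}"
  let ?E2 = "\<lambda>k::nat. k \<ge> 1 \<and> 1/t \<in> {1 / (2 * real k) .. 1 / (2 * real k - 1)}"
  have PM: "?PM k \<longleftrightarrow> k \<ge> 1 \<and> 2*real k - 1 \<le> t \<and> t \<le> 2*real k" for k
    using bm_iff[OF t, of k] by auto
  have PP: "?PP k \<longleftrightarrow> k \<ge> 1 \<and> 2*real k \<le> t \<and> t \<le> 2*real k + 1" for k
    using bp_iff[OF t, of k] by auto
  have E1: "?E1 k \<longleftrightarrow> k \<ge> 1 \<and> 2*real k \<le> t \<and> t \<le> 2*real k + 1" for k
    using e1_iff[OF t, of k] by auto
  have E2: "?E2 k \<longleftrightarrow> k \<ge> 1 \<and> 2*real k - 1 \<le> t \<and> t \<le> 2*real k" for k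
    using e2_iff[OF t, of k] by auto
  obtain k0 where k0: "k0 \<ge> 1" "(2*real k0 - 1 \<le> t \<and> t \<le> 2*real k0) \<or> (2*real k0 \<le> t \<and> t \<le> 2*real k0 + 1)"
    using exist_k[OF t] by blast
  show ?thesis
  proof (cases "\<exists>k. ?PM k")
    case True
    define k where "k = (SOME k. ?PM k)"
    have hk: "?PM k" unfolding k_def using True by (rule someI_ex)
    hence hk': "k \<ge> 1" "2*real k - 1 \<le> t" "t \<le> 2*real k" using PM by auto
    have L: "conj_f (oocf_T ?x) = 2*real k - t"
      unfolding oocf_T_def Let_def k_def[symmetric] if_not_P[OF x1] if_P[OF True]
      by (rule fm[OF hk'(2,3) t])
    show ?thesis
    proof (cases "\<exists>j. ?E1 j")
      case True2: True
      define j where "j = (SOME j. ?E1 j)"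
      have hj: "?E1 j" unfolding j_def using True2 by (rule someI_ex)
      hence hj': "j \<ge> 1" "2*real j \<le> t" "t \<le> 2*real j + 1" using E1 by auto
      have R: "eicf_T (1/t) = t - 2*real j"
        unfolding eicf_T_def Let_def j_def[symmetric] if_not_P[OF y0] if_P[OF True2] using t by simp
      have "j \<le> k" "k \<le> j + 1" using hk' hj' by linarith+
      hence "j = k \<or> k = j + 1" by linarith
      hence "t = real k + real j" using hk' hj' by auto
      thus ?thesis using L R by simp
    next
      case False2: False
      have ex2: "\<exists>j. ?E2 j" using PM E2 True by blast
      define j where "j = (SOME j. ?E2 j)"
      have hj: "?E2 j" unfolding j_def using ex2 by (rule someI_ex)
      hence hj': "j \<ge> 1" "2*real j - 1 \<le> t" "t \<le> 2*real j" using E2 by auto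
      have R: "eicf_T (1/t) = 2*real j - t"
        unfolding eicf_T_def Let_def j_def[symmetric] if_not_P[OF y0] if_not_P[OF False2] using t by simp
      have "j \<le> k" "k \<le> j" using hk' hj' by linarith+
      thus ?thesis using L R by simp
    qed
  next
    case False
    have exP: "\<exists>k. ?PP k" using k0 PM PP False by blast
    define k where "k = (SOME k. ?PP k)"
    have hk: "?PP k" unfolding k_def using exP by (rule someI_ex)
    hence hk': "k \<ge> 1" "2*real k \<le> t" "t \<le> 2*real k + 1" using PP by auto
    have L: "conj_f (oocf_T ?x) = t - 2*real k"
      unfolding oocf_T_def Let_def k_def[symmetric] if_not_P[OF x1] if_not_P[OF False]
      by (rule fp[OF hk'(2,3) t])
    have True2: "\<exists>j. ?E1 j" using hk E1 PP by blast
    define j where "j = (SOME j. ?E1 j)"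
    have hj: "?E1 j" unfolding j_def using True2 by (rule someI_ex)
    hence hj': "j \<ge> 1" "2*real j \<le> t" "t \<le> 2*real j + 1" using E1 by auto
    have R: "eicf_T (1/t) = t - 2*real j"
      unfolding eicf_T_def Let_def j_def[symmetric] if_not_P[OF y0] if_P[OF True2] using t by simp
    have "j \<le> k" "k \<le> j" using hk' hj' by linarith+
    thus ?thesis using L R by simp
  qed
qed

theorem mainTheorem5:
  shows "bij_betw conj_f {0..1} {0..1} \<and>
         (\<forall>y \<in> {0..1::real}. conj_f (oocf_T (inv_into {0..1} conj_f y)) = eicf_T y)"
proof (intro conjI ballI)
  show "bij_betw conj_f {0..1} {0..1::real}" by (rule cf_bij)
next
  fix y :: real assume y: "y \<in> {0..1}"
  have inv: "inv_into {0..1} conj_f y = conj_f y"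
    by (rule inv_into_f_eq) (use cf_bij y in \<open>auto simp: bij_betw_def cf_range cf_invol\<close>)
  show "conj_f (oocf_T (inv_into {0..1} conj_f y)) = eicf_T y"
  proof (cases "y = 0")
    case True
    have "inv_into {0..1} conj_f y = 1" using inv True by (simp add: conj_f_def)
    thus ?thesis using True by (simp add: conj_f_def oocf_T_def eicf_T_def)
  next
    case False
    define t where "t = 1/y"
    have t: "t \<ge> 1" using y False by (simp add: t_def divide_simps)
    have yt: "y = 1/t" by (simp add: t_def)
    show ?thesis unfolding inv unfolding yt cf_t[OF t] by (rule main_t[OF t])
  qed
qed

end
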